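(* Let $H$ be a Hermitian operator on a $d$-dimensional Hilbert space with spectral decomposition $H=\sum_{i=1}^M\lambda_i\Pi_i$, where $M\ge 2$, $\lambda_M>\cdots>\lambda_1$ are the distinct eigenvalues and $\Pi_i$ the spectral projections. Let $\Delta=\lambda_2-\lambda_1$, $d_G=\operatorname{Tr}[\Pi_1]$, and $\varepsilon>0$. If $$\beta=\frac{1}{\Delta}\ln\!\left[\left(\frac{1}{e^\varepsilon-1}\right)\left(\frac{d-d_G}{d_G}\right)\right]$$ and $\beta\ge 0$, then $$D\!\left(\frac{\Pi_1}{\operatorname{Tr}[\Pi_1]}\middle\|\frac{e^{-\beta H}}{\operatorname{Tr}[e^{-\beta H}]}\right)\le\varepsilon,$$ and the same inequality holds with $D$ replaced by $D_\alpha$, $\widetilde{D}_\alpha$, or $\widehat{D}_\alpha$ for every $\alpha\in(0,1)\cup(1,\infty)$.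
   Context: For states $\rho,\sigma$: $D(\rho\|\sigma)=\operatorname{Tr}[\rho(\ln\rho-\ln\sigma)]$ (quantum relative entropy); $D_\alpha(\rho\|\sigma)=\frac{1}{\alpha-1}\ln\operatorname{Tr}[\rho^\alpha\sigma^{1-\alpha}]$ (Petz–Rényi); $\widetilde{D}_\alpha(\rho\|\sigma)=\frac{1}{\alpha-1}\ln\operatorname{Tr}\!\left[\left(\sigma^{\frac{1-\alpha}{2\alpha}}\rho\,\sigma^{\frac{1-\alpha}{2\alpha}}\right)^\alpha\right]$ (sandwiched Rényi); $\widehat{D}_\alpha(\rho\|\sigma)=\frac{1}{\alpha-1}\ln\operatorname{Tr}\!\left[\sigma\left(\sigma^{-1/2}\rho\,\sigma^{-1/2}\right)^\alpha\right]$ (geometric Rényi). *)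

theory Defs
  imports "Jordan_Normal_Form.Schur_Decomposition"
begin

definition mat_trace :: "complex mat \<Rightarrow> complex" where
  "mat_trace A = (\<Sum>i<dim_row A. A $$ (i, i))"

definition hermitian_mat :: "complex mat \<Rightarrow> bool" where
  "hermitian_mat A \<longleftrightarrow> A \<in> carrier_mat (dim_row A) (dim_row A) \<and> mat_adjoint A = A"

definition unitary_mat :: "complex mat \<Rightarrow> bool" where
  "unitary_mat U \<longleftrightarrow> U \<in> carrier_mat (dim_row U) (dim_row U)
     \<and> U * mat_adjoint U = 1\<^sub>m (dim_row U) \<and> mat_adjoint U * U = 1\<^sub>m (dim_row U)"

definition spectral_decomp :: "complex mat \<Rightarrow> complex mat \<Rightarrow> (nat \<Rightarrow> real) \<Rightarrow> bool" where
  "spectral_decomp A U lam \<longleftrightarrow> unitary_mat U \<and> dim_row U = dim_row A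
     \<and> A = U * mat_diag (dim_row A) (\<lambda>i. complex_of_real (lam i)) * mat_adjoint U"

definition mat_fun :: "(real \<Rightarrow> real) \<Rightarrow> complex mat \<Rightarrow> complex mat" where
  "mat_fun f A = (let (U, lam) = (SOME (U, lam). spectral_decomp A U lam)
     in U * mat_diag (dim_row A) (\<lambda>i. complex_of_real (f (lam i))) * mat_adjoint U)"

definition mat_sum :: "nat \<Rightarrow> ('i \<Rightarrow> complex mat) \<Rightarrow> 'i set \<Rightarrow> complex mat" where
  "mat_sum d F I = Matrix.mat d d (\<lambda>(a, b). \<Sum>i\<in>I. F i $$ (a, b))"

text \<open>Logarithm on the support (standard convention 0 log 0 = 0; support inverse).\<close>
definition ln_supp :: "real \<Rightarrow> real" where
  "ln_supp x = (if x > 0 then ln x else 0)"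

definition rel_entropy :: "complex mat \<Rightarrow> complex mat \<Rightarrow> real" where
  "rel_entropy \<rho> \<sigma> = Re (mat_trace (\<rho> * (mat_fun ln_supp \<rho> - mat_fun ln_supp \<sigma>)))"

definition petz_renyi :: "real \<Rightarrow> complex mat \<Rightarrow> complex mat \<Rightarrow> real" where
  "petz_renyi \<alpha> \<rho> \<sigma> = 1 / (\<alpha> - 1) *
     ln (Re (mat_trace (mat_fun (\<lambda>x. x powr \<alpha>) \<rho> * mat_fun (\<lambda>x. x powr (1 - \<alpha>)) \<sigma>)))"

definition sandwiched_renyi :: "real \<Rightarrow> complex mat \<Rightarrow> complex mat \<Rightarrow> real" where
  "sandwiched_renyi \<alpha> \<rho> \<sigma> = (let S = mat_fun (\<lambda>x. x powr ((1 - \<alpha>) / (2 * \<alpha>))) \<sigma> in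
     1 / (\<alpha> - 1) * ln (Re (mat_trace (mat_fun (\<lambda>x. x powr \<alpha>) (S * \<rho> * S)))))"

definition geometric_renyi :: "real \<Rightarrow> complex mat \<Rightarrow> complex mat \<Rightarrow> real" where
  "geometric_renyi \<alpha> \<rho> \<sigma> = (let S = mat_fun (\<lambda>x. x powr (- 1 / 2)) \<sigma> in
     1 / (\<alpha> - 1) * ln (Re (mat_trace (\<sigma> * mat_fun (\<lambda>x. x powr \<alpha>) (S * \<rho> * S)))))"

end

theory Submission imports Defs begin

lemma adj_dim[simp]: "dim_row (mat_adjoint A) = dim_col A" "dim_col (mat_adjoint A) = dim_row A"
  unfolding mat_adjoint_def by (auto simp: mat_of_rows_def)

lemma adj_index[simp]: "i < dim_col A \<Longrightarrow> j < dim_row A \<Longrightarrow> mat_adjoint A $$ (i,j) = cnj (A $$ (j,i))"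
  unfolding mat_adjoint_def by (auto simp: mat_of_rows_def conjugate_complex_def)

lemma adj_carrier[simp]: "A \<in> carrier_mat n m \<Longrightarrow> mat_adjoint A \<in> carrier_mat m n"
  unfolding carrier_mat_def by simp

lemma adj_adj[simp]: "mat_adjoint (mat_adjoint (A::complex mat)) = A"
  by (rule eq_matI, simp_all)

lemma adj_mult: assumes "A \<in> carrier_mat n m" "B \<in> carrier_mat m k"
  shows "mat_adjoint (A * (B::complex mat)) = mat_adjoint B * mat_adjoint A"
proof (rule eq_matI)
  fix i j assume ij: "i < dim_row (mat_adjoint B * mat_adjoint A)" "j < dim_col (mat_adjoint B * mat_adjoint A)"
  have "mat_adjoint (A * B) $$ (i, j) = cnj (\<Sum>l<m. A $$ (j,l) * B $$ (l,i))"
    using assms ij by (simp add: scalar_prod_def atLeast0LessThan)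
  also have "\<dots> = (\<Sum>l<m. cnj (B $$ (l,i)) * cnj (A $$ (j,l)))"
    by (simp add: mult.commute)
  also have "\<dots> = (mat_adjoint B * mat_adjoint A) $$ (i, j)"
    using assms ij by (simp add: scalar_prod_def atLeast0LessThan)
  finally show "mat_adjoint (A * B) $$ (i, j) = (mat_adjoint B * mat_adjoint A) $$ (i, j)" .
next show "dim_row (mat_adjoint (A * B)) = dim_row (mat_adjoint B * mat_adjoint A)" using assms by simp
next show "dim_col (mat_adjoint (A * B)) = dim_col (mat_adjoint B * mat_adjoint A)" using assms by simp
qed

lemma adj_one[simp]: "mat_adjoint (1\<^sub>m n :: complex mat) = 1\<^sub>m n"
  by (rule eq_matI, simp_all)


lemma mat_diag_dims[simp]: "dim_row (mat_diag n f) = n" "dim_col (mat_diag n f) = n"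
  unfolding mat_diag_def by auto

lemma unitaryI2: assumes "U \<in> carrier_mat n n" "mat_adjoint U * U = 1\<^sub>m n"
  shows "unitary_mat (U :: complex mat)"
proof -
  have "U * mat_adjoint U = 1\<^sub>m n"
    by (rule mat_mult_left_right_inverse[of _ n]) (use assms in auto)
  thus ?thesis using assms unfolding unitary_mat_def by auto
qed

lemma unitaryD: assumes "unitary_mat U" "dim_row U = n"
  shows "U \<in> carrier_mat n n" "mat_adjoint U * U = 1\<^sub>m n" "U * mat_adjoint U = 1\<^sub>m n"
  using assms unfolding unitary_mat_def by auto

lemma unitary_mult: assumes "unitary_mat U" "dim_row U = n" "unitary_mat V" "dim_row V = n"
  shows "unitary_mat (U * V)"
proof -
  note u = unitaryD[OF assms(1,2)] and v = unitaryD[OF assms(3,4)]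
  have uv: "mat_adjoint U * (U * V) = V"
    by (subst assoc_mult_mat[symmetric, of _ n n _ n _ n]) (use u v in auto)
  have "mat_adjoint (U * V) * (U * V) = mat_adjoint V * mat_adjoint U * (U * V)"
    using u v by (simp only: adj_mult[of U n n V n])
  also have "\<dots> = mat_adjoint V * (mat_adjoint U * (U * V))"
    using u v by (intro assoc_mult_mat[of _ n n _ n _ n]) auto
  also have "\<dots> = 1\<^sub>m n" unfolding uv using v by simp
  finally show ?thesis using u v by (intro unitaryI2[of _ n]) auto
qed

lemma cscalar_self: assumes "w \<in> carrier_vec n"
  shows "w \<bullet>c w = complex_of_real (\<Sum>k<n. (cmod (w $ k))^2)"
proof -
  have "w \<bullet>c w = (\<Sum>k<n. w $ k * cnj (w $ k))"
    using assms by (simp add: scalar_prod_def atLeast0LessThan)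
  also have "\<dots> = (\<Sum>k<n. complex_of_real ((cmod (w $ k))^2))"
    by (simp only: complex_norm_square)
  also have "\<dots> = complex_of_real (\<Sum>k<n. (cmod (w $ k))^2)" by (simp only: of_real_sum)
  finally show ?thesis .
qed


lemma spectral_exists:
  fixes A :: "complex mat"
  assumes "A \<in> carrier_mat n n" "mat_adjoint A = A"
  shows "\<exists>U lam. unitary_mat U \<and> dim_row U = n \<and>
     A = U * mat_diag n (\<lambda>i. complex_of_real (lam i)) * mat_adjoint U"
  using assms
proof (induction n arbitrary: A)
  case 0
  have "A = 1\<^sub>m 0 * mat_diag 0 (\<lambda>i. complex_of_real 0) * mat_adjoint (1\<^sub>m 0)"
    using 0 by (intro eq_matI) auto
  moreover have "unitary_mat (1\<^sub>m 0 :: complex mat)" unfolding unitary_mat_def by simp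
  ultimately show ?case by (intro exI[of _ "1\<^sub>m 0"] exI[of _ "\<lambda>_. 0"]) auto
next
  case (Suc m A)
  define n where "n = Suc m"
  have A: "A \<in> carrier_mat n n" and herm: "mat_adjoint A = A" using Suc.prems n_def by auto
  obtain es where es: "char_poly A = (\<Prod>a\<leftarrow>es. [:- a, 1:])" "length es = n"
    using char_poly_factorized[OF A] by blast
  then obtain e es' where ee: "es = e # es'" by (cases es) (auto simp: n_def)
  have "poly (char_poly A) e = 0" unfolding es(1) ee by simp
  hence ev: "eigenvalue A e" using eigenvalue_root_char_poly[OF A] by simp
  define v where "v = find_eigenvector A e"
  have "eigenvector A v e" unfolding v_def by (rule find_eigenvector[OF A ev])
  hence v: "v \<in> carrier_vec n" and v0: "v \<noteq> 0\<^sub>v n" and Av: "A *\<^sub>v v = e \<cdot>\<^sub>v v"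
    using A unfolding eigenvector_def by auto
  interpret cof_vec_space n "TYPE(complex)" .
  define b where "b = basis_completion v"
  define ws where "ws = gram_schmidt n b"
  from basis_completion[OF v v0, folded b_def]
  have dist_b: "distinct b" 
    and indep: "\<not> lin_dep (set b)" and b: "set b \<subseteq> carrier_vec n" and hdb: "hd b = v" 
    and len_b: "length b = n" by auto
  from hdb len_b obtain vs where bv: "b = v # vs" by (cases b, auto simp: n_def)
  from gram_schmidt_result[OF b dist_b indep refl, folded ws_def]
  have ws: "set ws \<subseteq> carrier_vec n" "corthogonal ws" "length ws = n" 
    by (auto simp: len_b)
  from gram_schmidt_hd[OF v, of vs, folded bv] have hdws: "hd ws = v" unfolding ws_def .
  have ws0: "ws ! 0 = v" using hdws ws(3) by (cases ws) (auto simp: n_def)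
  have wsc: "\<And>j. j < n \<Longrightarrow> ws ! j \<in> carrier_vec n" using ws by auto
  define r where "r j = (\<Sum>k<n. (cmod (ws ! j $ k))^2)" for j
  have r_pos: "r j > 0" if j: "j < n" for j
  proof -
    have "ws ! j \<bullet>c ws ! j \<noteq> 0" using corthogonalD[OF ws(2)] ws(3) j by auto
    moreover have "ws ! j \<bullet>c ws ! j = complex_of_real (r j)"
      using cscalar_self[OF wsc[OF j]] unfolding r_def .
    ultimately have "r j \<noteq> 0" by auto
    moreover have "r j \<ge> 0" unfolding r_def by (intro sum_nonneg) auto
    ultimately show ?thesis by linarith
  qed
  define c where "c j = 1 / sqrt (r j)" for j
  define U0 where "U0 = mat n n (\<lambda>(k,j). complex_of_real (c j) * ws ! j $ k)"
  have U0c: "U0 \<in> carrier_mat n n" unfolding U0_def by simp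
  have adjU0c: "mat_adjoint U0 \<in> carrier_mat n n" using U0c by simp
  have U0U0: "mat_adjoint U0 * U0 = 1\<^sub>m n"
  proof (rule eq_matI)
    fix i j assume "i < dim_row (1\<^sub>m n :: complex mat)" "j < dim_col (1\<^sub>m n :: complex mat)"
    hence ij: "i < n" "j < n" by auto
    have "(mat_adjoint U0 * U0) $$ (i,j) =
       (\<Sum>k<n. cnj (complex_of_real (c i) * ws!i$k) * (complex_of_real (c j) * ws!j$k))"
      using ij U0c by (simp add: U0_def scalar_prod_def atLeast0LessThan)
    also have "\<dots> = complex_of_real (c i * c j) * (ws!j \<bullet>c ws!i)"
      using wsc[OF ij(1)] wsc[OF ij(2)] by (simp add: scalar_prod_def atLeast0LessThan sum_distrib_left algebra_simps)
    also have "\<dots> = (1\<^sub>m n) $$ (i,j)"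
    proof (cases "i = j")
      case True
      have "ws!i \<bullet>c ws!i = complex_of_real (r i)" using cscalar_self[OF wsc[OF ij(1)]] unfolding r_def .
      moreover have "c i * c i * r i = 1" using r_pos[OF ij(1)] unfolding c_def
        by (simp add: field_simps)
      ultimately show ?thesis using True ij
        by (metis index_one_mat(1) of_real_1 of_real_mult)
    next
      case False
      hence "ws!j \<bullet>c ws!i = 0" using corthogonalD[OF ws(2)] ws(3) ij by auto
      thus ?thesis using False ij by simp
    qed
    finally show "(mat_adjoint U0 * U0) $$ (i,j) = (1\<^sub>m n) $$ (i,j)" .
  qed (use U0c in auto)
  have U0u: "unitary_mat U0" by (rule unitaryI2[OF U0c U0U0])
  have U0adj: "U0 * mat_adjoint U0 = 1\<^sub>m n" using unitaryD(3)[OF U0u] carrier_matD(1)[OF U0c] by simp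
  have n0: "0 < n" unfolding n_def by simp
  have colU0: "col U0 0 = complex_of_real (c 0) \<cdot>\<^sub>v v"
    by (rule eq_vecI) (use v n0 ws0 in \<open>auto simp: U0_def\<close>)
  have AU0: "col (A * U0) 0 = e \<cdot>\<^sub>v col U0 0"
  proof -
    have "col (A * U0) 0 = A *\<^sub>v col U0 0" by (rule col_mult2[OF A U0c n0])
    also have "\<dots> = complex_of_real (c 0) \<cdot>\<^sub>v (e \<cdot>\<^sub>v v)" unfolding colU0
      using mult_mat_vec[OF A v] Av by simp
    also have "\<dots> = e \<cdot>\<^sub>v col U0 0" unfolding colU0 by (simp add: smult_smult_assoc mult.commute)
    finally show ?thesis .
  qed
  define A' where "A' = mat_adjoint U0 * A * U0"
  have A'c: "A' \<in> carrier_mat n n" unfolding A'_def using U0c adjU0c A by (meson mult_carrier_mat)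
  have A'2: "A' = mat_adjoint U0 * (A * U0)" unfolding A'_def using U0c A
    by (intro assoc_mult_mat[of _ n n _ n _ n]) auto
  have A'herm: "mat_adjoint A' = A'"
  proof -
    have "mat_adjoint A' = mat_adjoint (A * U0) * mat_adjoint (mat_adjoint U0)"
      unfolding A'2 using U0c A by (intro adj_mult[of _ n n _ n]) auto
    also have "\<dots> = (mat_adjoint U0 * A) * U0"
      using U0c A herm by (simp add: adj_mult[of A n n U0 n])
    finally show ?thesis unfolding A'_def .
  qed
  have A'col: "A' $$ (i,0) = (if i = 0 then e else 0)" if i: "i < n" for i
  proof -
    have "A' $$ (i,0) = row (mat_adjoint U0) i \<bullet> col (A * U0) 0"
      unfolding A'2 using i n0 U0c A by simp
    also have "\<dots> = e * (row (mat_adjoint U0) i \<bullet> col U0 0)"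
      unfolding AU0 using U0c by simp
    also have "row (mat_adjoint U0) i \<bullet> col U0 0 = (mat_adjoint U0 * U0) $$ (i,0)"
      using i n0 U0c by simp
    also have "\<dots> = (if i = 0 then 1 else 0)" unfolding U0U0 using i n0 by simp
    finally show ?thesis by simp
  qed
  have A'adj: "A' $$ (i,j) = cnj (A' $$ (j,i))" if "i < n" "j < n" for i j
  proof -
    have "mat_adjoint A' $$ (i,j) = cnj (A' $$ (j,i))"
      by (rule adj_index) (use A'c that in auto)
    thus ?thesis unfolding A'herm .
  qed
  have e_real: "complex_of_real (Re e) = e"
  proof -
    have "e = cnj e" using A'adj[OF n0 n0] A'col[OF n0] by simp
    hence "cnj e = e" by simp
    hence "Im e = 0" using Reals_cnj_iff complex_is_Real_iff by blast
    thus ?thesis by (intro complex_eqI) simp_all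
  qed
  have A'row: "A' $$ (0,j) = 0" if "0 < j" "j < n" for j
    using A'adj[OF n0 that(2)] A'col[OF that(2)] that by simp
  define A3 where "A3 = mat m m (\<lambda>(i,j). A' $$ (Suc i, Suc j))"
  have A3c: "A3 \<in> carrier_mat m m" unfolding A3_def by simp
  have A3herm: "mat_adjoint A3 = A3"
  proof (rule eq_matI)
    fix i j assume "i < dim_row A3" "j < dim_col A3"
    hence ij: "i < m" "j < m" using A3c by auto
    have "A' $$ (Suc i, Suc j) = cnj (A' $$ (Suc j, Suc i))"
      by (rule A'adj) (use ij in \<open>auto simp: n_def\<close>)
    thus "mat_adjoint A3 $$ (i, j) = A3 $$ (i, j)" using ij by (simp add: A3_def)
  qed (use A3c in auto)
  from Suc.IH[OF A3c A3herm] obtain V l where V: "unitary_mat V" "dim_row V = m"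
    and A3eq: "A3 = V * mat_diag m (\<lambda>i. complex_of_real (l i)) * mat_adjoint V" by blast
  note vu = unitaryD[OF V]
  define L where "L i = (case i of 0 \<Rightarrow> Re e | Suc k \<Rightarrow> l k)" for i
  define U1 where "U1 = four_block_mat (1\<^sub>m 1) (0\<^sub>m 1 m) (0\<^sub>m m 1) V"
  have U1c: "U1 \<in> carrier_mat n n" unfolding U1_def n_def using vu by auto
  have adjU1: "mat_adjoint U1 = four_block_mat (1\<^sub>m 1) (0\<^sub>m 1 m) (0\<^sub>m m 1) (mat_adjoint V)"
    by (rule eq_matI) (use vu in \<open>auto simp: U1_def\<close>)
  have U1U1: "mat_adjoint U1 * U1 = 1\<^sub>m n"
    unfolding adjU1 unfolding U1_def
    by (subst mult_four_block_mat[of _ 1 1 _ m _ m _ _ 1 _ m]) (use vu in \<open>auto simp: n_def\<close>)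
  have U1u: "unitary_mat U1" by (rule unitaryI2[OF U1c U1U1])
  have Dblock: "mat_diag n (\<lambda>i. complex_of_real (L i)) =
     four_block_mat (mat_diag 1 (\<lambda>_. e)) (0\<^sub>m 1 m) (0\<^sub>m m 1) (mat_diag m (\<lambda>i. complex_of_real (l i)))"
    by (rule eq_matI) (auto simp: n_def mat_diag_def L_def e_real split: nat.split)
  have A'block: "A' = four_block_mat (mat_diag 1 (\<lambda>_. e)) (0\<^sub>m 1 m) (0\<^sub>m m 1) A3"
  proof (rule eq_matI)
    fix i j assume "i < dim_row (four_block_mat (mat_diag 1 (\<lambda>_. e)) (0\<^sub>m 1 m) (0\<^sub>m m 1) A3)"
      "j < dim_col (four_block_mat (mat_diag 1 (\<lambda>_. e)) (0\<^sub>m 1 m) (0\<^sub>m m 1) A3)"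
    hence ij: "i < n" "j < n" using A3c by (auto simp: n_def)
    show "A' $$ (i, j) = four_block_mat (mat_diag 1 (\<lambda>_. e)) (0\<^sub>m 1 m) (0\<^sub>m m 1) A3 $$ (i, j)"
      using ij A3c A'col A'row
      by (cases i; cases j) (auto simp: mat_diag_def A3_def n_def)
  qed (use A'c A3c in \<open>auto simp: n_def\<close>)
  have M1: "U1 * mat_diag n (\<lambda>i. complex_of_real (L i)) = four_block_mat (mat_diag 1 (\<lambda>_. e)) (0\<^sub>m 1 m) (0\<^sub>m m 1)
       (V * mat_diag m (\<lambda>i. complex_of_real (l i)))"
    unfolding Dblock unfolding U1_def
    by (subst mult_four_block_mat[of _ 1 1 _ m _ m _ _ 1 _ m]) (use vu in auto)
  have M2: "four_block_mat (mat_diag 1 (\<lambda>_. e)) (0\<^sub>m 1 m) (0\<^sub>m m 1)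
       (V * mat_diag m (\<lambda>i. complex_of_real (l i))) * mat_adjoint U1 =
     four_block_mat (mat_diag 1 (\<lambda>_. e)) (0\<^sub>m 1 m) (0\<^sub>m m 1)
       (V * mat_diag m (\<lambda>i. complex_of_real (l i)) * mat_adjoint V)"
    unfolding adjU1
    by (subst mult_four_block_mat[of _ 1 1 _ m _ m _ _ 1 _ m]) (use vu in auto)
  have A'eq: "A' = U1 * mat_diag n (\<lambda>i. complex_of_real (L i)) * mat_adjoint U1"
    unfolding M1 M2 A'block A3eq ..
  have mc: "X * Y \<in> carrier_mat n n" if "X \<in> carrier_mat n n" "Y \<in> carrier_mat n n" for X Y :: "complex mat"
    using that by simp
  note ass = assoc_mult_mat[of _ n n _ n _ n]
  have "A = U0 * A' * mat_adjoint U0"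
  proof -
    have "U0 * A' * mat_adjoint U0 = (U0 * mat_adjoint U0) * A * (U0 * mat_adjoint U0)"
      unfolding A'_def using U0c adjU0c A
      by (simp add: mc ass)
    thus ?thesis using U0adj A by simp
  qed
  also have "\<dots> = (U0 * U1) * mat_diag n (\<lambda>i. complex_of_real (L i)) * mat_adjoint (U0 * U1)"
    unfolding A'eq adj_mult[OF U0c U1c] using U0c U1c adjU0c
    by (simp add: mc ass)
  finally show ?case
    by (intro exI[of _ "U0 * U1"] exI[of _ L]) (use unitary_mult[OF U0u _ U1u] U0c U1c in \<open>auto simp: n_def\<close>)
qed


lemma mat_sum_carrier[simp]: "mat_sum d F J \<in> carrier_mat d d"
  unfolding mat_sum_def by simp

lemma mat_sum_dims[simp]: "dim_row (mat_sum d F J) = d" "dim_col (mat_sum d F J) = d"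
  unfolding mat_sum_def by simp_all

lemma mat_sum_index[simp]: "x < d \<Longrightarrow> y < d \<Longrightarrow> mat_sum d F J $$ (x,y) = (\<Sum>j\<in>J. F j $$ (x,y))"
  unfolding mat_sum_def by simp

lemma mat_sum_mult_index:
  assumes "\<And>j. j \<in> J \<Longrightarrow> F j \<in> carrier_mat d d" "V \<in> carrier_mat d d" "x < d" "k < d"
  shows "(mat_sum d F J * V) $$ (x,k) = (\<Sum>j\<in>J. (F j * V) $$ (x,k))"
proof -
  have "(mat_sum d F J * V) $$ (x,k) = (\<Sum>l<d. (\<Sum>j\<in>J. F j $$ (x,l)) * V $$ (l,k))"
    using assms by (simp add: scalar_prod_def atLeast0LessThan)
  also have "\<dots> = (\<Sum>j\<in>J. \<Sum>l<d. F j $$ (x,l) * V $$ (l,k))"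
    by (simp add: sum_distrib_right sum.swap[of _ J])
  also have "\<dots> = (\<Sum>j\<in>J. (F j * V) $$ (x,k))"
  proof (intro sum.cong refl)
    fix j assume "j \<in> J"
    hence "F j \<in> carrier_mat d d" using assms by auto
    thus "(\<Sum>l<d. F j $$ (x,l) * V $$ (l,k)) = (F j * V) $$ (x,k)"
      using assms by (simp add: scalar_prod_def atLeast0LessThan)
  qed
  finally show ?thesis .
qed

lemma proj_trace:
  assumes P: "P \<in> carrier_mat d d" "mat_adjoint P = P" "P * P = P"
  shows "mat_trace P = complex_of_real (\<Sum>x<d. \<Sum>l<d. (cmod (P $$ (x,l)))^2)"
proof -
  have "mat_trace P = (\<Sum>x<d. (P * mat_adjoint P) $$ (x,x))"
    unfolding mat_trace_def using P by simp
  also have "\<dots> = (\<Sum>x<d. \<Sum>l<d. P $$ (x,l) * cnj (P $$ (x,l)))"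
    using P(1) by (intro sum.cong refl) (simp add: scalar_prod_def atLeast0LessThan)
  also have "\<dots> = (\<Sum>x<d. \<Sum>l<d. complex_of_real ((cmod (P $$ (x,l)))^2))"
    by (simp only: complex_norm_square)
  also have "\<dots> = complex_of_real (\<Sum>x<d. \<Sum>l<d. (cmod (P $$ (x,l)))^2)"
    by (simp only: of_real_sum)
  finally show ?thesis .
qed

lemma proj_trace_pos:
  assumes P: "P \<in> carrier_mat d d" "P \<noteq> 0\<^sub>m d d"
  shows "(\<Sum>x<d. \<Sum>l<d. (cmod (P $$ (x,l)))^2) > 0"
proof -
  obtain x l where xl: "x < d" "l < d" "P $$ (x,l) \<noteq> 0"
  proof (rule ccontr)
    assume "\<not> thesis"
    with that have "\<And>x l. x < d \<Longrightarrow> l < d \<Longrightarrow> P $$ (x,l) = 0" by blast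
    hence "P = 0\<^sub>m d d" using P(1) by (intro eq_matI) auto
    with P(2) show False by simp
  qed
  have "(\<Sum>l<d. (cmod (P $$ (x,l)))^2) > 0"
    by (rule sum_pos2[of _ l]) (use xl in auto)
  thus ?thesis
    using sum_pos2[of "{..<d}" x "\<lambda>x. \<Sum>l<d. (cmod (P $$ (x,l)))^2"] xl
    by (simp add: sum_nonneg)
qed

locale projfam =
  fixes d :: nat and J :: "nat set" and P :: "nat \<Rightarrow> complex mat"
  assumes fin: "finite J"
  and Pc: "\<And>j. j \<in> J \<Longrightarrow> P j \<in> carrier_mat d d"
  and Ph: "\<And>j. j \<in> J \<Longrightarrow> mat_adjoint (P j) = P j"
  and Pidem: "\<And>j. j \<in> J \<Longrightarrow> P j * P j = P j"
  and Porth: "\<And>i j. i \<in> J \<Longrightarrow> j \<in> J \<Longrightarrow> i \<noteq> j \<Longrightarrow> P i * P j = 0\<^sub>m d d"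
  and Psum: "mat_sum d P J = 1\<^sub>m d"
begin

definition S :: "(nat \<Rightarrow> real) \<Rightarrow> complex mat" where
  "S a = mat_sum d (\<lambda>j. complex_of_real (a j) \<cdot>\<^sub>m P j) J"

lemma S_carrier[simp]: "S a \<in> carrier_mat d d" and S_dims[simp]: "dim_row (S a) = d" "dim_col (S a) = d"
  unfolding S_def by simp_all

lemma S_index: "x < d \<Longrightarrow> y < d \<Longrightarrow> S a $$ (x,y) = (\<Sum>j\<in>J. complex_of_real (a j) * P j $$ (x,y))"
  unfolding S_def
proof (simp, intro sum.cong refl)
  fix j assume "x < d" "y < d" "j \<in> J"
  thus "(complex_of_real (a j) \<cdot>\<^sub>m P j) $$ (x, y) = complex_of_real (a j) * P j $$ (x, y)"
    using Pc[of j] by simp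
qed

lemma P_S: assumes i: "i \<in> J" shows "P i * S a = complex_of_real (a i) \<cdot>\<^sub>m P i"
proof (rule eq_matI)
  fix x y assume "x < dim_row (complex_of_real (a i) \<cdot>\<^sub>m P i)" "y < dim_col (complex_of_real (a i) \<cdot>\<^sub>m P i)"
  hence xy: "x < d" "y < d" using Pc[OF i] by auto
  have "(P i * S a) $$ (x,y) = (\<Sum>l<d. P i $$ (x,l) * (\<Sum>j\<in>J. complex_of_real (a j) * P j $$ (l,y)))"
    using xy Pc[OF i] by (simp add: scalar_prod_def atLeast0LessThan S_index)
  also have "\<dots> = (\<Sum>j\<in>J. \<Sum>l<d. complex_of_real (a j) * (P i $$ (x,l) * P j $$ (l,y)))"
    by (simp add: sum_distrib_left sum.swap[of _ J] algebra_simps)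
  also have "\<dots> = (\<Sum>j\<in>J. complex_of_real (a j) * (P i * P j) $$ (x,y))"
  proof (intro sum.cong refl)
    fix j assume "j \<in> J"
    hence "P j \<in> carrier_mat d d" using Pc by auto
    thus "(\<Sum>l<d. complex_of_real (a j) * (P i $$ (x,l) * P j $$ (l,y))) = complex_of_real (a j) * (P i * P j) $$ (x,y)"
      using xy Pc[OF i] by (simp add: scalar_prod_def atLeast0LessThan sum_distrib_left)
  qed
  also have "\<dots> = (\<Sum>j\<in>J. if j = i then complex_of_real (a i) * P i $$ (x,y) else 0)"
    using xy Pidem Porth i by (intro sum.cong refl) auto
  also have "\<dots> = (complex_of_real (a i) \<cdot>\<^sub>m P i) $$ (x,y)"
    using xy Pc[OF i] i fin by simp
  finally show "(P i * S a) $$ (x,y) = (complex_of_real (a i) \<cdot>\<^sub>m P i) $$ (x,y)" .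
qed (use Pc[OF i] in auto)

lemma S_mult: "S a * S b = S (\<lambda>j. a j * b j)"
proof (rule eq_matI)
  fix x y assume "x < dim_row (S (\<lambda>j. a j * b j))" "y < dim_col (S (\<lambda>j. a j * b j))"
  hence xy: "x < d" "y < d" by auto
  have "(S a * S b) $$ (x,y) = (\<Sum>j\<in>J. ((complex_of_real (a j) \<cdot>\<^sub>m P j) * S b) $$ (x,y))"
    unfolding S_def[of a] by (rule mat_sum_mult_index) (use Pc xy in auto)
  also have "\<dots> = (\<Sum>j\<in>J. complex_of_real (a j * b j) * P j $$ (x,y))"
  proof (intro sum.cong refl)
    fix j assume j: "j \<in> J"
    have "(complex_of_real (a j) \<cdot>\<^sub>m P j) * S b = complex_of_real (a j) \<cdot>\<^sub>m (P j * S b)"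
      by (rule mult_smult_assoc_mat[OF Pc[OF j] S_carrier])
    also have "\<dots> = complex_of_real (a j) \<cdot>\<^sub>m (complex_of_real (b j) \<cdot>\<^sub>m P j)" by (simp add: P_S[OF j])
    finally show "((complex_of_real (a j) \<cdot>\<^sub>m P j) * S b) $$ (x,y) = complex_of_real (a j * b j) * P j $$ (x,y)"
      using xy Pc[OF j] by simp
  qed
  also have "\<dots> = S (\<lambda>j. a j * b j) $$ (x,y)" using xy by (simp add: S_index)
  finally show "(S a * S b) $$ (x,y) = S (\<lambda>j. a j * b j) $$ (x,y)" .
qed auto

lemma S_smult: "complex_of_real c \<cdot>\<^sub>m S a = S (\<lambda>j. c * a j)"
  by (rule eq_matI) (auto simp: S_index sum_distrib_left algebra_simps)

lemma S_minus: "S a - S b = S (\<lambda>j. a j - b j)"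
  by (rule eq_matI) (auto simp: S_index sum_subtractf algebra_simps)

lemma S_one: "S (\<lambda>_. 1) = 1\<^sub>m d"
proof (rule eq_matI)
  fix x y assume "x < dim_row (1\<^sub>m d :: complex mat)" "y < dim_col (1\<^sub>m d :: complex mat)"
  hence xy: "x < d" "y < d" by auto
  have "S (\<lambda>_. 1) $$ (x,y) = mat_sum d P J $$ (x,y)" using xy by (simp add: S_index)
  thus "S (\<lambda>_. 1) $$ (x,y) = 1\<^sub>m d $$ (x,y)" unfolding Psum .
qed auto

lemma S_herm: "mat_adjoint (S a) = S a"
proof (rule eq_matI)
  fix x y assume "x < dim_row (S a)" "y < dim_col (S a)"
  hence xy: "x < d" "y < d" by auto
  have "mat_adjoint (S a) $$ (x,y) = (\<Sum>j\<in>J. complex_of_real (a j) * cnj (P j $$ (y,x)))"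
    using xy by (simp add: S_index)
  also have "\<dots> = (\<Sum>j\<in>J. complex_of_real (a j) * P j $$ (x,y))"
  proof (intro sum.cong refl)
    fix j assume j: "j \<in> J"
    have "mat_adjoint (P j) $$ (x,y) = cnj (P j $$ (y,x))" using Pc[OF j] xy by simp
    thus "complex_of_real (a j) * cnj (P j $$ (y,x)) = complex_of_real (a j) * P j $$ (x,y)"
      unfolding Ph[OF j] by simp
  qed
  finally show "mat_adjoint (S a) $$ (x,y) = S a $$ (x,y)" using xy by (simp add: S_index)
qed auto

lemma S_trace: "mat_trace (S a) = (\<Sum>j\<in>J. complex_of_real (a j) * mat_trace (P j))"
proof -
  have "mat_trace (S a) = (\<Sum>x<d. \<Sum>j\<in>J. complex_of_real (a j) * P j $$ (x,x))"
    unfolding mat_trace_def by (simp add: S_index)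
  also have "\<dots> = (\<Sum>j\<in>J. complex_of_real (a j) * (\<Sum>x<d. P j $$ (x,x)))"
    by (simp add: sum.swap[of _ J] sum_distrib_left)
  also have "\<dots> = (\<Sum>j\<in>J. complex_of_real (a j) * mat_trace (P j))"
    unfolding mat_trace_def using Pc by (intro sum.cong refl) auto
  finally show ?thesis .
qed

lemma key:
  assumes sd: "spectral_decomp (S mu) V nu"
  shows "V * mat_diag d (\<lambda>i. complex_of_real (f (nu i))) * mat_adjoint V = S (\<lambda>j. f (mu j))"
proof -
  have V: "unitary_mat V" "dim_row V = d" and Aeq: "S mu = V * mat_diag d (\<lambda>i. complex_of_real (nu i)) * mat_adjoint V"
    using sd unfolding spectral_decomp_def by auto
  note vu = unitaryD[OF V]
  define D where "D = mat_diag d (\<lambda>i. complex_of_real (nu i))"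
  have Dc: "D \<in> carrier_mat d d" unfolding D_def by simp
  have AV: "S mu * V = V * D"
  proof -
    have "S mu * V = V * D * (mat_adjoint V * V)"
      unfolding Aeq D_def[symmetric] using vu Dc by (simp add: assoc_mult_mat[of _ d d _ d _ d])
    thus ?thesis using vu Dc by simp
  qed
  have ev: "(P j * V) $$ (x,k) * complex_of_real (f (nu k)) = complex_of_real (f (mu j)) * (P j * V) $$ (x,k)"
    if j: "j \<in> J" and xk: "x < d" "k < d" for j x k
  proof -
    have "P j * (S mu * V) = (P j * S mu) * V"
      using Pc[OF j] vu by (simp add: assoc_mult_mat[of _ d d _ d _ d])
    also have "\<dots> = complex_of_real (mu j) \<cdot>\<^sub>m (P j * V)"
      unfolding P_S[OF j] using Pc[OF j] vu by (simp add: mult_smult_assoc_mat)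
    finally have 1: "P j * (S mu * V) = complex_of_real (mu j) \<cdot>\<^sub>m (P j * V)" .
    have "P j * (V * D) = (P j * V) * D"
      using Pc[OF j] vu Dc by (simp add: assoc_mult_mat[of _ d d _ d _ d])
    also have "\<dots> = Matrix.mat d d (\<lambda>(i,k). (P j * V) $$ (i,k) * complex_of_real (nu k))"
      unfolding D_def by (rule mat_diag_mult_right) (use Pc[OF j] vu in auto)
    finally have 2: "P j * (V * D) = Matrix.mat d d (\<lambda>(i,k). (P j * V) $$ (i,k) * complex_of_real (nu k))" .
    define z where "z = (P j * V) $$ (x,k)"
    have h: "(P j * (S mu * V)) $$ (x,k) = (P j * (V * D)) $$ (x,k)" using AV by simp
    have l: "(P j * (S mu * V)) $$ (x,k) = complex_of_real (mu j) * z"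
      unfolding 1 z_def using xk Pc[OF j] vu by simp
    have r: "(P j * (V * D)) $$ (x,k) = z * complex_of_real (nu k)"
      unfolding 2 z_def using xk by simp
    have zz: "complex_of_real (mu j) * z = z * complex_of_real (nu k)" using h unfolding l r .
    have "z * complex_of_real (f (nu k)) = complex_of_real (f (mu j)) * z"
    proof (cases "z = 0")
      case False
      hence "complex_of_real (mu j) = complex_of_real (nu k)" using zz by (simp add: mult.commute)
      hence "mu j = nu k" by simp
      thus ?thesis by (simp add: mult.commute)
    qed simp
    thus ?thesis unfolding z_def .
  qed
  have SV: "S (\<lambda>j. f (mu j)) * V = V * mat_diag d (\<lambda>i. complex_of_real (f (nu i)))"
  proof (rule eq_matI)
    fix x k assume "x < dim_row (V * mat_diag d (\<lambda>i. complex_of_real (f (nu i))))"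
      "k < dim_col (V * mat_diag d (\<lambda>i. complex_of_real (f (nu i))))"
    hence xk: "x < d" "k < d" using vu by auto
    have "(S (\<lambda>j. f (mu j)) * V) $$ (x,k) = (\<Sum>j\<in>J. ((complex_of_real (f (mu j)) \<cdot>\<^sub>m P j) * V) $$ (x,k))"
      unfolding S_def[of "\<lambda>j. f (mu j)"] by (rule mat_sum_mult_index) (use Pc xk vu in auto)
    also have "\<dots> = (\<Sum>j\<in>J. complex_of_real (f (nu k)) * (P j * V) $$ (x,k))"
    proof (intro sum.cong refl)
      fix j assume j: "j \<in> J"
      have "((complex_of_real (f (mu j)) \<cdot>\<^sub>m P j) * V) $$ (x,k) = complex_of_real (f (mu j)) * (P j * V) $$ (x,k)"
        using Pc[OF j] vu xk by (simp add: mult_smult_assoc_mat)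
      also have "\<dots> = complex_of_real (f (nu k)) * (P j * V) $$ (x,k)"
        using ev[OF j xk] by (metis mult.commute)
      finally show "((complex_of_real (f (mu j)) \<cdot>\<^sub>m P j) * V) $$ (x,k) = complex_of_real (f (nu k)) * (P j * V) $$ (x,k)" .
    qed
    also have "\<dots> = complex_of_real (f (nu k)) * (mat_sum d P J * V) $$ (x,k)"
      by (subst mat_sum_mult_index) (use Pc xk vu in \<open>auto simp: sum_distrib_left\<close>)
    also have "\<dots> = complex_of_real (f (nu k)) * V $$ (x,k)" unfolding Psum using vu xk by simp
    also have "\<dots> = (V * mat_diag d (\<lambda>i. complex_of_real (f (nu i)))) $$ (x,k)"
      by (subst mat_diag_mult_right[of _ d d]) (use vu xk in auto)
    finally show "(S (\<lambda>j. f (mu j)) * V) $$ (x,k) = (V * mat_diag d (\<lambda>i. complex_of_real (f (nu i)))) $$ (x,k)" .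
  qed (use vu in auto)
  have "S (\<lambda>j. f (mu j)) = S (\<lambda>j. f (mu j)) * V * mat_adjoint V"
    using vu by (simp add: assoc_mult_mat[of _ d d _ d _ d])
  thus ?thesis unfolding SV by simp
qed

lemma S_decomp_exists: "\<exists>V nu. spectral_decomp (S a) V nu"
proof -
  obtain V nu where V: "unitary_mat V" "dim_row V = d"
    and eq: "S (\<lambda>j. real j) = V * mat_diag d (\<lambda>i. complex_of_real (nu i)) * mat_adjoint V"
    using spectral_exists[OF S_carrier S_herm, of "\<lambda>j. real j"] by blast
  have sd: "spectral_decomp (S (\<lambda>j. real j)) V nu"
    unfolding spectral_decomp_def using V eq by simp
  have "V * mat_diag d (\<lambda>i. complex_of_real (a (nat (round (nu i))))) * mat_adjoint V
      = S (\<lambda>j. a (nat (round (real j))))"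
    by (rule key[OF sd])
  also have "(\<lambda>j. a (nat (round (real j)))) = a" by simp
  finally have "spectral_decomp (S a) V (\<lambda>i. a (nat (round (nu i))))"
    unfolding spectral_decomp_def using V by simp
  thus ?thesis by blast
qed

lemma mat_fun_S: "mat_fun f (S a) = S (\<lambda>j. f (a j))"
proof -
  define p where "p = (SOME (U, lam). spectral_decomp (S a) U lam)"
  have "case p of (U,lam) \<Rightarrow> spectral_decomp (S a) U lam"
    unfolding p_def by (rule someI_ex) (use S_decomp_exists[of a] in auto)
  moreover obtain U lam where p: "p = (U,lam)" by (cases p)
  ultimately have sd: "spectral_decomp (S a) U lam" by simp
  have "mat_fun f (S a) = U * mat_diag d (\<lambda>i. complex_of_real (f (lam i))) * mat_adjoint U"
    unfolding mat_fun_def p_def[symmetric] p by simp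
  also have "\<dots> = S (\<lambda>j. f (a j))" by (rule key[OF sd])
  finally show ?thesis .
qed

end

lemma petz_val:
  fixes g s1 \<alpha> :: real assumes "g > 0" "s1 > 0" "\<alpha> \<noteq> 1"
  shows "1 / (\<alpha> - 1) * ln ((1/g) powr \<alpha> * s1 powr (1 - \<alpha>) * g) = - (ln g + ln s1)"
proof -
  have "ln ((1/g) powr \<alpha> * s1 powr (1 - \<alpha>) * g) = \<alpha> * (- ln g) + (1 - \<alpha>) * ln s1 + ln g"
    using assms by (simp add: ln_mult ln_powr ln_div)
  also have "\<dots> = (1 - \<alpha>) * (ln g + ln s1)" by (simp add: algebra_simps)
  finally show ?thesis using assms by (simp add: field_simps)
qed

lemma sand_val:
  fixes g s1 \<alpha> :: real assumes g: "g > 0" and s1: "s1 > 0" and a: "\<alpha> > 0" "\<alpha> \<noteq> 1"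
  shows "1 / (\<alpha> - 1) * ln ((s1 powr ((1 - \<alpha>) / (2 * \<alpha>)) * (1/g) * s1 powr ((1 - \<alpha>) / (2 * \<alpha>))) powr \<alpha> * g)
     = - (ln g + ln s1)"
proof -
  define c where "c = (1 - \<alpha>) / (2 * \<alpha>)"
  have pos: "s1 powr c * (1/g) * s1 powr c > 0" using g s1 by simp
  have A: "ln (s1 powr c * (1/g) * s1 powr c) = c * ln s1 - ln g + c * ln s1"
    using g s1 by (simp add: ln_mult ln_powr ln_div)
  have "ln ((s1 powr c * (1/g) * s1 powr c) powr \<alpha> * g) = \<alpha> * ln (s1 powr c * (1/g) * s1 powr c) + ln g"
    using pos g s1 by (simp add: ln_mult ln_powr)
  also have "\<dots> = 2 * (\<alpha> * c) * ln s1 - \<alpha> * ln g + ln g" unfolding A by (simp add: algebra_simps)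
  also have "\<dots> = (1 - \<alpha>) * (ln g + ln s1)"
  proof -
    have ac: "2 * (\<alpha> * c) = 1 - \<alpha>" unfolding c_def using a by (simp add: field_simps)
    show ?thesis unfolding ac by (simp add: algebra_simps)
  qed
  finally have "ln ((s1 powr c * (1/g) * s1 powr c) powr \<alpha> * g) = (1 - \<alpha>) * (ln g + ln s1)" .
  thus ?thesis unfolding c_def[symmetric] using a by (simp add: field_simps)
qed

lemma geo_val:
  fixes g s1 \<alpha> :: real assumes "g > 0" "s1 > 0" "\<alpha> \<noteq> 1"
  shows "1 / (\<alpha> - 1) * ln (s1 * (s1 powr (- 1 / 2) * (1/g) * s1 powr (- 1 / 2)) powr \<alpha> * g)
     = - (ln g + ln s1)"
proof -
  have "ln (s1 * (s1 powr (- 1 / 2) * (1/g) * s1 powr (- 1 / 2)) powr \<alpha> * g)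
      = ln s1 + \<alpha> * (- ln s1 - ln g) + ln g"
    using assms by (simp add: ln_mult ln_powr ln_div algebra_simps)
  also have "\<dots> = (1 - \<alpha>) * (ln g + ln s1)" by (simp add: algebra_simps)
  finally show ?thesis using assms by (simp add: field_simps)
qed

lemma bound_val:
  fixes g Dm Z l1 l2 \<beta> \<epsilon> :: real
  assumes g: "g > 0" and Dm: "Dm > 0" and eps: "\<epsilon> > 0" and l: "l1 < l2"
    and beta: "\<beta> = 1 / (l2 - l1) * ln ((1 / (exp \<epsilon> - 1)) * (Dm / g))"
    and Z: "Z > 0" "Z \<le> exp (- \<beta> * l1) * g + exp (- \<beta> * l2) * Dm"
  shows "- (ln g + ln (exp (- \<beta> * l1) / Z)) \<le> \<epsilon>"
proof -
  define X where "X = (1 / (exp \<epsilon> - 1)) * (Dm / g)"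
  have e1: "exp \<epsilon> - 1 > 0" using eps by simp
  have X: "X > 0" unfolding X_def using e1 g Dm by simp
  have bd: "\<beta> * (l2 - l1) = ln X" unfolding beta X_def[symmetric] using l by simp
  have "exp (- \<beta> * l2) = exp (- \<beta> * l1) * exp (- (\<beta> * (l2 - l1)))"
    by (simp add: mult_exp_exp algebra_simps)
  also have "exp (- (\<beta> * (l2 - l1))) = 1 / X" unfolding bd using X by (simp add: exp_minus inverse_eq_divide)
  finally have e2: "exp (- \<beta> * l2) = exp (- \<beta> * l1) / X" by simp
  have "Dm / X = g * (exp \<epsilon> - 1)" unfolding X_def using e1 g Dm by (simp add: field_simps)
  hence gD: "g + Dm / X = g * exp \<epsilon>" by (simp add: algebra_simps)
  have "Z \<le> exp (- \<beta> * l1) * g + exp (- \<beta> * l1) / X * Dm" using Z(2) unfolding e2 by (simp add: mult.commute)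
  also have "\<dots> = exp (- \<beta> * l1) * (g + Dm / X)" by (simp add: distrib_left)
  also have "\<dots> = exp (- \<beta> * l1) * g * exp \<epsilon>" unfolding gD by simp
  finally have Zb: "Z \<le> exp (- \<beta> * l1) * g * exp \<epsilon>" .
  have "ln Z \<le> ln (exp (- \<beta> * l1) * g * exp \<epsilon>)" using Zb Z(1) by simp
  also have "\<dots> = - \<beta> * l1 + ln g + \<epsilon>" using g by (simp add: ln_mult)
  finally have "ln Z \<le> - \<beta> * l1 + ln g + \<epsilon>" .
  moreover have "ln (exp (- \<beta> * l1) / Z) = - \<beta> * l1 - ln Z" using Z(1) by (simp add: ln_div)
  ultimately show ?thesis by simp
qed

theorem corollary3:
  fixes d M :: nat and H :: "complex mat" and lam :: "nat \<Rightarrow> real"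
    and P :: "nat \<Rightarrow> complex mat" and \<epsilon> \<beta> :: real
  assumes H: "H \<in> carrier_mat d d" "hermitian_mat H"
    and M: "M \<ge> 2"
    and lam_mono: "strict_mono_on {1..M} lam"
    and P_proj: "\<forall>i\<in>{1..M}. P i \<in> carrier_mat d d \<and> hermitian_mat (P i)
                   \<and> P i * P i = P i \<and> P i \<noteq> 0\<^sub>m d d"
    and P_orth: "\<forall>i\<in>{1..M}. \<forall>j\<in>{1..M}. i \<noteq> j \<longrightarrow> P i * P j = 0\<^sub>m d d"
    and P_complete: "mat_sum d P {1..M} = 1\<^sub>m d"
    and H_decomp: "H = mat_sum d (\<lambda>i. complex_of_real (lam i) \<cdot>\<^sub>m P i) {1..M}"
    and eps: "\<epsilon> > 0"
    and beta_def: "\<beta> = 1 / (lam 2 - lam 1) *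
        ln ((1 / (exp \<epsilon> - 1)) * ((real d - Re (mat_trace (P 1))) / Re (mat_trace (P 1))))"
    and beta_nonneg: "\<beta> \<ge> 0"
  shows "let \<rho> = (1 / mat_trace (P 1)) \<cdot>\<^sub>m P 1;
             E = mat_fun exp (complex_of_real (- \<beta>) \<cdot>\<^sub>m H);
             \<sigma> = (1 / mat_trace E) \<cdot>\<^sub>m E
         in rel_entropy \<rho> \<sigma> \<le> \<epsilon>
            \<and> (\<forall>\<alpha>::real. \<alpha> > 0 \<and> \<alpha> \<noteq> 1 \<longrightarrow>
                 petz_renyi \<alpha> \<rho> \<sigma> \<le> \<epsilon>
               \<and> sandwiched_renyi \<alpha> \<rho> \<sigma> \<le> \<epsilon>
               \<and> geometric_renyi \<alpha> \<rho> \<sigma> \<le> \<epsilon>)"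
proof -
  let ?J = "{1..M::nat}"
  have Pc: "P j \<in> carrier_mat d d" and Ph: "mat_adjoint (P j) = P j" and Pid: "P j * P j = P j"
    and Pnz: "P j \<noteq> 0\<^sub>m d d" if "j \<in> ?J" for j
    using P_proj that unfolding hermitian_mat_def by auto
  interpret pf: projfam d ?J P
    by unfold_locales (use Pc Ph Pid P_orth P_complete in auto)
  have J1: "1 \<in> ?J" and J2: "2 \<in> ?J" using M by auto
  define dd where "dd j = Re (mat_trace (P j))" for j
  define g where "g = Re (mat_trace (P 1))"
  have gdd: "g = dd 1" unfolding g_def dd_def ..
  have trP: "mat_trace (P j) = complex_of_real (dd j)" and dd_pos: "dd j > 0" if j: "j \<in> ?J" for j
  proof -
    have t: "mat_trace (P j) = complex_of_real (\<Sum>x<d. \<Sum>l<d. (cmod (P j $$ (x,l)))^2)"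
      by (rule proj_trace[OF Pc[OF j] Ph[OF j] Pid[OF j]])
    thus "mat_trace (P j) = complex_of_real (dd j)" unfolding dd_def by simp
    show "dd j > 0" unfolding dd_def t using proj_trace_pos[OF Pc[OF j] Pnz[OF j]] by simp
  qed
  have g_pos: "g > 0" using dd_pos[OF J1] gdd by simp
  have trS: "Re (mat_trace (pf.S a)) = (\<Sum>j\<in>?J. a j * dd j)" for a
  proof -
    have "mat_trace (pf.S a) = (\<Sum>j\<in>?J. complex_of_real (a j) * mat_trace (P j))" by (rule pf.S_trace)
    also have "\<dots> = (\<Sum>j\<in>?J. complex_of_real (a j * dd j))" by (intro sum.cong refl) (simp add: trP)
    also have "\<dots> = complex_of_real (\<Sum>j\<in>?J. a j * dd j)" by (simp only: of_real_sum)
    finally show ?thesis by simp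
  qed
  have single: "Re (mat_trace (pf.S a)) = a 1 * g" if a0: "\<And>j. j \<in> ?J \<Longrightarrow> j \<noteq> 1 \<Longrightarrow> a j = 0" for a
  proof -
    have "(\<Sum>j\<in>?J. a j * dd j) = (\<Sum>j\<in>?J. if j = 1 then a 1 * dd 1 else 0)"
      by (intro sum.cong refl) (use a0 in auto)
    also have "\<dots> = a 1 * g" using J1 gdd by simp
    finally show ?thesis unfolding trS .
  qed
  have sumdd: "(\<Sum>j\<in>?J. dd j) = real d"
  proof -
    have "Re (mat_trace (pf.S (\<lambda>_. 1))) = real d" unfolding pf.S_one mat_trace_def by simp
    thus ?thesis unfolding trS by simp
  qed
  have Dm: "real d - g > 0"
  proof -
    have "(\<Sum>j\<in>?J. dd j) = dd 1 + (\<Sum>j\<in>?J - {1}. dd j)" using J1 by (simp add: sum.remove)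
    moreover have "(\<Sum>j\<in>?J - {1}. dd j) \<ge> dd 2"
      by (rule member_le_sum) (use J2 dd_pos in \<open>auto intro: less_imp_le\<close>)
    ultimately show ?thesis using sumdd gdd dd_pos[OF J2] by simp
  qed
  define r where "r = (\<lambda>j::nat. if j = 1 then 1 / g else 0)"
  have rho: "(1 / mat_trace (P 1)) \<cdot>\<^sub>m P 1 = pf.S r"
  proof (rule eq_matI)
    fix x y assume "x < dim_row (pf.S r)" "y < dim_col (pf.S r)"
    hence xy: "x < d" "y < d" using pf.S_dims[of r] by auto
    have "pf.S r $$ (x,y) = (\<Sum>j\<in>?J. if j = 1 then complex_of_real (1/g) * P 1 $$ (x,y) else 0)"
      unfolding pf.S_index[OF xy] by (intro sum.cong refl) (auto simp: r_def)
    also have "\<dots> = complex_of_real (1/g) * P 1 $$ (x,y)" using J1 by simp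
    also have "\<dots> = ((1 / mat_trace (P 1)) \<cdot>\<^sub>m P 1) $$ (x,y)"
      using xy Pc[OF J1] trP[OF J1] gdd by simp
    finally show "((1 / mat_trace (P 1)) \<cdot>\<^sub>m P 1) $$ (x,y) = pf.S r $$ (x,y)" by simp
  qed (use Pc[OF J1] pf.S_dims[of r] in auto)
  have HS: "H = pf.S lam" unfolding pf.S_def H_decomp ..
  define t where "t = (\<lambda>j. exp (- \<beta> * lam j))"
  have E: "mat_fun exp (complex_of_real (- \<beta>) \<cdot>\<^sub>m H) = pf.S t"
    unfolding HS pf.S_smult pf.mat_fun_S t_def ..
  define Z where "Z = (\<Sum>j\<in>?J. t j * dd j)"
  have Zpos: "Z > 0" unfolding Z_def
    by (rule sum_pos) (use dd_pos M in \<open>auto simp: t_def\<close>)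
  have trE: "mat_trace (pf.S t) = complex_of_real Z"
  proof -
    have "Re (mat_trace (pf.S t)) = Z" unfolding trS Z_def ..
    moreover have "mat_trace (pf.S t) = (\<Sum>j\<in>?J. complex_of_real (t j) * mat_trace (P j))" by (rule pf.S_trace)
    hence "Im (mat_trace (pf.S t)) = 0" by (simp add: trP)
    ultimately show ?thesis by (simp add: complex_eq_iff)
  qed
  define s where "s = (\<lambda>j. 1 / Z * t j)"
  have sigma: "(1 / mat_trace (pf.S t)) \<cdot>\<^sub>m pf.S t = pf.S s"
  proof -
    have c: "1 / mat_trace (pf.S t) = complex_of_real (1 / Z)" unfolding trE by simp
    show ?thesis unfolding c pf.S_smult s_def ..
  qed
  have s1: "s 1 > 0" unfolding s_def t_def using Zpos by simp
  have s1': "s 1 = exp (- \<beta> * lam 1) / Z" unfolding s_def t_def by simp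
  define L where "L = - (ln g + ln (s 1))"
  have r0: "\<And>j. j \<noteq> 1 \<Longrightarrow> r j = 0" unfolding r_def by simp
  have r1: "r 1 = 1 / g" unfolding r_def by simp
  have D: "rel_entropy (pf.S r) (pf.S s) = L"
  proof -
    have "rel_entropy (pf.S r) (pf.S s) = Re (mat_trace (pf.S (\<lambda>j. r j * (ln_supp (r j) - ln_supp (s j)))))"
      unfolding rel_entropy_def pf.mat_fun_S pf.S_minus pf.S_mult ..
    also have "\<dots> = r 1 * (ln_supp (r 1) - ln_supp (s 1)) * g" by (rule single) (simp add: r0)
    also have "\<dots> = L" unfolding L_def r1 ln_supp_def using g_pos s1 by (simp add: ln_div)
    finally show ?thesis .
  qed
  have Dal: "petz_renyi \<alpha> (pf.S r) (pf.S s) = L \<and> sandwiched_renyi \<alpha> (pf.S r) (pf.S s) = L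
      \<and> geometric_renyi \<alpha> (pf.S r) (pf.S s) = L" if al: "\<alpha> > 0" "\<alpha> \<noteq> 1" for \<alpha> :: real
  proof (intro conjI)
    have "petz_renyi \<alpha> (pf.S r) (pf.S s) = 1 / (\<alpha> - 1) *
        ln (Re (mat_trace (pf.S (\<lambda>j. r j powr \<alpha> * s j powr (1 - \<alpha>)))))"
      unfolding petz_renyi_def pf.mat_fun_S pf.S_mult ..
    also have "Re (mat_trace (pf.S (\<lambda>j. r j powr \<alpha> * s j powr (1 - \<alpha>)))) = r 1 powr \<alpha> * s 1 powr (1 - \<alpha>) * g"
      by (rule single) (simp add: r0)
    finally show "petz_renyi \<alpha> (pf.S r) (pf.S s) = L"
      unfolding r1 L_def using petz_val[OF g_pos s1 al(2)] by simp
  next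
    have "sandwiched_renyi \<alpha> (pf.S r) (pf.S s) = 1 / (\<alpha> - 1) *
        ln (Re (mat_trace (pf.S (\<lambda>j. (s j powr ((1 - \<alpha>) / (2 * \<alpha>)) * r j * s j powr ((1 - \<alpha>) / (2 * \<alpha>))) powr \<alpha>))))"
      unfolding sandwiched_renyi_def Let_def pf.mat_fun_S pf.S_mult ..
    also have "Re (mat_trace (pf.S (\<lambda>j. (s j powr ((1 - \<alpha>) / (2 * \<alpha>)) * r j * s j powr ((1 - \<alpha>) / (2 * \<alpha>))) powr \<alpha>)))
        = (s 1 powr ((1 - \<alpha>) / (2 * \<alpha>)) * r 1 * s 1 powr ((1 - \<alpha>) / (2 * \<alpha>))) powr \<alpha> * g"
      by (rule single) (simp add: r0)
    finally show "sandwiched_renyi \<alpha> (pf.S r) (pf.S s) = L"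
      unfolding r1 L_def using sand_val[OF g_pos s1 al] by simp
  next
    have "geometric_renyi \<alpha> (pf.S r) (pf.S s) = 1 / (\<alpha> - 1) *
        ln (Re (mat_trace (pf.S (\<lambda>j. s j * (s j powr (- 1 / 2) * r j * s j powr (- 1 / 2)) powr \<alpha>))))"
      unfolding geometric_renyi_def Let_def pf.mat_fun_S pf.S_mult ..
    also have "Re (mat_trace (pf.S (\<lambda>j. s j * (s j powr (- 1 / 2) * r j * s j powr (- 1 / 2)) powr \<alpha>)))
        = s 1 * (s 1 powr (- 1 / 2) * r 1 * s 1 powr (- 1 / 2)) powr \<alpha> * g"
      by (rule single) (simp add: r0)
    finally show "geometric_renyi \<alpha> (pf.S r) (pf.S s) = L"
      unfolding r1 L_def using geo_val[OF g_pos s1 al(2)] by simp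
  qed
  have lam12: "lam 1 < lam 2" using lam_mono J1 J2 unfolding strict_mono_on_def by auto
  have lamj: "lam 2 \<le> lam j" if "j \<in> ?J - {1}" for j
  proof (cases "j = 2")
    case False
    hence "2 < j" using that by auto
    thus ?thesis using lam_mono J2 that unfolding strict_mono_on_def by (auto intro: less_imp_le)
  qed simp
  have Zb: "Z \<le> exp (- \<beta> * lam 1) * g + exp (- \<beta> * lam 2) * (real d - g)"
  proof -
    have "Z = t 1 * dd 1 + (\<Sum>j\<in>?J - {1}. t j * dd j)" unfolding Z_def using sum.remove[of ?J 1 "\<lambda>j. t j * dd j"] J1 by simp
    also have "(\<Sum>j\<in>?J - {1}. t j * dd j) \<le> (\<Sum>j\<in>?J - {1}. exp (- \<beta> * lam 2) * dd j)"
    proof (rule sum_mono)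
      fix j assume j: "j \<in> ?J - {1}"
      have "t j \<le> exp (- \<beta> * lam 2)" unfolding t_def using lamj[OF j] beta_nonneg
        by (simp add: mult_left_mono)
      thus "t j * dd j \<le> exp (- \<beta> * lam 2) * dd j" using dd_pos[of j] j by (intro mult_right_mono) auto
    qed
    also have "(\<Sum>j\<in>?J - {1}. exp (- \<beta> * lam 2) * dd j) = exp (- \<beta> * lam 2) * (real d - g)"
    proof -
      have "(\<Sum>j\<in>?J. dd j) = dd 1 + (\<Sum>j\<in>?J - {1}. dd j)" using J1 by (simp add: sum.remove)
      hence rest: "(\<Sum>j\<in>?J - {1}. dd j) = real d - g" using sumdd gdd by linarith
      show ?thesis unfolding sum_distrib_left[symmetric] rest ..
    qed
    finally show ?thesis unfolding t_def gdd by simp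
  qed
  have Lb: "L \<le> \<epsilon>" unfolding L_def s1'
    by (rule bound_val[OF g_pos Dm eps lam12 _ Zpos Zb]) (simp add: beta_def g_def)
  show ?thesis unfolding Let_def E sigma rho using D Dal Lb by auto
qed

end
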